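(* Let $R,R'$ be parallelograms in $\mathbb{R}^2$ each having a pair of vertical edges, such that $I(R)=I(R')$, $U(R)\cap U(R')\neq\emptyset$, $R\cap R'\neq\emptyset$, and $H(R)\le H(R')$. Then $R\subseteq 7R'$. Moreover, if $7H(R)\le H(R')$, then $7R\subseteq 7R'$.
   Context: For a parallelogram $R$ with two vertical edges: the height $H(R)$ is the common length of the vertical edges; the shadow $I(R)$ is the projection of $R$ onto the $x$-axis; the central line segment is the segment joining the midpoints of the vertical edges; $U(R)$ is the set of slopes of (non-vertical) lines intersecting both vertical edges of $R$. For $C>0$, $CR$ denotes the parallelogram with the same central line segment as $R$ and height $C\,H(R)$. *)

theory Defs
  imports Complex_Main
begin

text \<open>A parallelogram in the plane with two vertical edges is described by its
shadow endpoints (left < right), the line y = slope * x + icpt carrying its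
central line segment, and its height (length of the vertical edges, > 0).\<close>

record vpar =
  left :: real
  right :: real
  slope :: real
  icpt :: real
  height :: real

definition valid_par :: "vpar \<Rightarrow> bool" where
  "valid_par P \<longleftrightarrow> left P < right P \<and> 0 < height P"

definition par_set :: "vpar \<Rightarrow> (real \<times> real) set" where
  "par_set P = {z. left P \<le> fst z \<and> fst z \<le> right P \<and>
                   \<bar>snd z - (slope P * fst z + icpt P)\<bar> \<le> height P / 2}"

definition H :: "vpar \<Rightarrow> real" where
  "H P = height P"

definition shadow :: "vpar \<Rightarrow> real set" where
  "shadow P = fst ` par_set P"

definition left_edge :: "vpar \<Rightarrow> (real \<times> real) set" where
  "left_edge P = {(left P, y) | y. \<bar>y - (slope P * left P + icpt P)\<bar> \<le> height P / 2}"

definition right_edge :: "vpar \<Rightarrow> (real \<times> real) set" where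
  "right_edge P = {(right P, y) | y. \<bar>y - (slope P * right P + icpt P)\<bar> \<le> height P / 2}"

definition U :: "vpar \<Rightarrow> real set" where
  "U P = {s. \<exists>t. (\<exists>z\<in>left_edge P. snd z = s * fst z + t) \<and>
                  (\<exists>z\<in>right_edge P. snd z = s * fst z + t)}"

definition scale :: "real \<Rightarrow> vpar \<Rightarrow> vpar" where
  "scale C P = P\<lparr>height := C * height P\<rparr>"

end

theory Submission
  imports Defs
begin

lemma shadow_Icc: "valid_par P \<Longrightarrow> shadow P = {left P..right P}"
  unfolding shadow_def par_set_def valid_par_def
proof (auto simp: image_iff)
  fix x assume "0 < height P"
  then show "\<exists>b. \<bar>b - (slope P * x + icpt P)\<bar> * 2 \<le> height P"
    by (intro exI[of _ "slope P * x + icpt P"]) simp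
qed

lemma U_bound:
  assumes "s \<in> U P"
  shows "\<bar>(slope P - s) * (right P - left P)\<bar> \<le> height P"
proof -
  from assms obtain t y1 y2 where
    1: "\<bar>y1 - (slope P * left P + icpt P)\<bar> \<le> height P / 2" "y1 = s * left P + t" and
    2: "\<bar>y2 - (slope P * right P + icpt P)\<bar> \<le> height P / 2" "y2 = s * right P + t"
    unfolding U_def left_edge_def right_edge_def by auto
  have "(slope P - s) * (right P - left P) =
        (slope P * right P + icpt P - y2) - (slope P * left P + icpt P - y1)"
    using 1 2 by (simp add: algebra_simps)
  then show ?thesis using 1 2 unfolding abs_le_iff by linarith
qed

lemma key:
  fixes a b x x0 p q h h' :: real
  assumes "a \<le> x" "x \<le> b" "a \<le> x0" "x0 \<le> b"
    and "\<bar>p * (b - a)\<bar> \<le> h + h'" and "\<bar>p * x0 + q\<bar> \<le> (h + h') / 2"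
  shows "\<bar>p * x + q\<bar> \<le> 3 * (h + h') / 2"
proof -
  have "\<bar>p * (x - x0)\<bar> = \<bar>p\<bar> * \<bar>x - x0\<bar>" by (simp add: abs_mult)
  also have "\<dots> \<le> \<bar>p\<bar> * (b - a)" using assms by (intro mult_left_mono) auto
  also have "\<dots> = \<bar>p * (b - a)\<bar>" using assms by (simp add: abs_mult)
  finally have "\<bar>p * (x - x0)\<bar> \<le> h + h'" using assms by linarith
  moreover have "p * x + q = p * (x - x0) + (p * x0 + q)" by (simp add: algebra_simps)
  moreover have gen: "\<bar>D + E\<bar> \<le> 3 * (h + h') / 2"
    if "\<bar>D\<bar> \<le> h + h'" "\<bar>E\<bar> \<le> (h + h') / 2" for D E :: real
    using that abs_triangle_ineq[of D E] by argo
  ultimately show ?thesis using assms(6) by metis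
qed

theorem lemma3p1:
  assumes "valid_par R" and "valid_par R'"
    and "shadow R = shadow R'"
    and "U R \<inter> U R' \<noteq> {}"
    and "par_set R \<inter> par_set R' \<noteq> {}"
    and "H R \<le> H R'"
  shows "par_set R \<subseteq> par_set (scale 7 R') \<and>
         (7 * H R \<le> H R' \<longrightarrow> par_set (scale 7 R) \<subseteq> par_set (scale 7 R'))"
proof -
  have eq: "{left R..right R} = {left R'..right R'}"
    using assms(1-3) shadow_Icc by metis
  have lr: "left R = left R'" "right R = right R'"
    using eq assms(1,2) unfolding valid_par_def by (simp_all add: Icc_eq_Icc)
  obtain s where s: "s \<in> U R" "s \<in> U R'" using assms(4) by blast
  have b1: "\<bar>(slope R - s) * (right R - left R)\<bar> \<le> height R" using U_bound[OF s(1)] .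
  have b2: "\<bar>(slope R' - s) * (right R - left R)\<bar> \<le> height R'" using U_bound[OF s(2)] lr by simp
  have "(slope R - slope R') * (right R - left R) =
        (slope R - s) * (right R - left R) - (slope R' - s) * (right R - left R)"
    by (simp add: algebra_simps)
  then have bp: "\<bar>(slope R - slope R') * (right R - left R)\<bar> \<le> height R + height R'"
    using b1 b2 by (simp add: abs_le_iff)
  obtain z where z: "z \<in> par_set R" "z \<in> par_set R'" using assms(5) by blast
  let ?x0 = "fst z"
  have zx: "left R \<le> ?x0" "?x0 \<le> right R" using z(1) unfolding par_set_def by auto
  have "\<bar>(slope R - slope R') * ?x0 + (icpt R - icpt R')\<bar> \<le> (height R + height R') / 2"
  proof -
    have "\<bar>snd z - (slope R * ?x0 + icpt R)\<bar> \<le> height R / 2"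
         "\<bar>snd z - (slope R' * ?x0 + icpt R')\<bar> \<le> height R' / 2"
      using z unfolding par_set_def by auto
    moreover have "(slope R - slope R') * ?x0 + (icpt R - icpt R') =
       (snd z - (slope R' * ?x0 + icpt R')) - (snd z - (slope R * ?x0 + icpt R))"
      by (simp add: algebra_simps)
    moreover have "\<bar>A - B\<bar> \<le> (height R + height R') / 2"
      if "\<bar>B\<bar> \<le> height R / 2" "\<bar>A\<bar> \<le> height R' / 2" for A B :: real
      using that abs_triangle_ineq4[of A B] by argo
    ultimately show ?thesis by metis
  qed
  note K = key[OF _ _ zx bp this]
  have hh: "height R \<le> height R'" "0 < height R" using assms(6,1) unfolding H_def valid_par_def by auto
  have A: "par_set (scale C R) \<subseteq> par_set (scale 7 R')" if C: "C * height R \<le> height R' \<or> C = 1" "C > 0" for C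
  proof
    fix w assume w: "w \<in> par_set (scale C R)"
    have wx: "left R \<le> fst w" "fst w \<le> right R"
      and wy: "\<bar>snd w - (slope R * fst w + icpt R)\<bar> \<le> C * height R / 2"
      using w unfolding par_set_def scale_def by auto
    have f1: "C * height R \<le> height R'" using C hh by auto
    have f2: "\<bar>(slope R - slope R') * fst w + (icpt R - icpt R')\<bar> \<le> 3 * (height R + height R') / 2"
      using K wx by blast
    have "\<bar>snd w - (slope R' * fst w + icpt R')\<bar> \<le> 7 * height R' / 2"
    proof -
      have e: "snd w - (slope R' * fst w + icpt R') = (snd w - (slope R * fst w + icpt R)) +
          ((slope R - slope R') * fst w + (icpt R - icpt R'))" by (simp add: algebra_simps)
      have g: "\<bar>Q + Dd\<bar> \<le> 7 * height R' / 2"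
        if "\<bar>Q\<bar> \<le> C * height R / 2" "\<bar>Dd\<bar> \<le> 3 * (height R + height R') / 2"
           "C * height R \<le> height R'" for Q Dd
        using that hh abs_triangle_ineq[of Q Dd] by argo
      show ?thesis unfolding e using g[OF wy f2 f1] .
    qed
    then show "w \<in> par_set (scale 7 R')"
      using wx lr unfolding par_set_def scale_def by simp
  qed
  have "par_set (scale 1 R) = par_set R" by (simp add: scale_def)
  then show ?thesis using A[of 1] A[of 7] unfolding H_def by auto
qed

end
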